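(* Let $\ell\in\mathbb{N}$, $h\in\bigwedge(V_{2\ell}^* )$, let $G$ be an Eulerian graph with Eulerian orientation $\omega$ and compatible local ordering $\kappa$, and let $\phi:E(G)\to[\ell]$. Let $C$ be a $\kappa$-circuit, let $\omega'$ be obtained from $\omega$ by reversing the orientation of every edge of $C$, and let $\kappa'$ be obtained from $\kappa$ by, at each passage of $C$ through a vertex $v$ via consecutive arcs $a$ (incoming) and $a'$ (outgoing, with $\kappa_v^-(a)+1=\kappa_v^+(a')$), interchanging the labels of $a$ and $a'$ (so $\kappa'$ is compatible with $\omega'$). Then $s_{h,\phi}(G,\omega,\kappa)=s_{h,\phi}(G,\omega',\kappa')$.
   Context: Setup: $V_{2\ell}=\mathbb{C}^{2\ell}$ with standard basis $e_1,\dots,e_{2\ell}$; $f_i=-e_{i+\ell}$ for $i\le\ell$, $f_i=e_{i-\ell}$ for $i>\ell$. $\bigwedge(V_{2\ell}^* )=\bigoplus_{n=0}^{2\ell}\bigwedge^n(V_{2\ell}^* )$, and $h$ applied to an $n$-fold tensor means its skew-symmetric component $h^n$ applied to it. Graphs may have loops and multiple edges; Eulerian means every vertex has even degree. An Eulerian orientation $\omega$ makes in-degree equal out-degree at each vertex (a loop gives one incoming and one outgoing arc). A compatible local ordering $\kappa$ consists at each vertex $v$ of degree $d(v)$ of bijections $\kappa_v^-:\delta^-(v)\to\{1,3,\dots,d(v)-1\}$ and $\kappa_v^+:\delta^+(v)\to\{2,4,\dots,d(v)\}$; $\kappa_v^{-1}(i)$ is the arc at $v$ with label $i$. The $\kappa$-circuits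 are the closed walks $(v_1,a_1,\dots,a_i,v_i,a_{i+1},\dots,v_1)$ with $\kappa^-_{v_i}(a_i)+1=\kappa^+_{v_i}(a_{i+1})$ into which $\kappa$ decomposes the edge set; $c(G,\kappa)$ is their number. For $\phi:E(G)\to[\ell]$ define $s_{h,\phi}(G,\omega,\kappa)=(-1)^{c(G,\kappa)}\sum_{\psi:E(G)\to\{0,\ell\}}\prod_{v\in V(G)} h\big(\bigotimes_{i=1,3,\dots,d(v)-1} e_{(\phi+\psi)(\kappa_v^{-1}(i))}\otimes f_{(\phi+\psi)(\kappa_v^{-1}(i+1))}\big)$, where $(\phi+\psi)(e)=\phi(e)+\psi(e)$. *)

theory Defs
  imports Complex_Main "HOL-Library.FuncSet"
begin

text \<open>Vectors of C^{2l} are functions nat => complex supported on {1..2l}.\<close>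
definition Vsp :: "nat \<Rightarrow> (nat \<Rightarrow> complex) set" where
  "Vsp l = {x. \<forall>i. (i < 1 \<or> i > 2*l) \<longrightarrow> x i = 0}"

definition evec :: "nat \<Rightarrow> (nat \<Rightarrow> complex)" where
  "evec i = (\<lambda>j. if j = i then 1 else 0)"

definition fvec :: "nat \<Rightarrow> nat \<Rightarrow> (nat \<Rightarrow> complex)" where
  "fvec l i = (if i \<le> l then (\<lambda>j. - evec (i + l) j) else evec (i - l))"

text \<open>An element h of the exterior algebra of the dual of V_{2l}: the family of its
  homogeneous components h^n, i.e. skew-symmetric (alternating) multilinear forms on V_{2l}^n.
  h applied to a list of n vectors is h^n applied to them.\<close>
definition exterior_form :: "nat \<Rightarrow> ((nat \<Rightarrow> complex) list \<Rightarrow> complex) \<Rightarrow> bool" where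
  "exterior_form l h \<longleftrightarrow>
    (\<forall>xs k x y a b. set xs \<subseteq> Vsp l \<and> k < length xs \<and> x \<in> Vsp l \<and> y \<in> Vsp l \<longrightarrow>
        h (xs[k := (\<lambda>t. a * x t + b * y t)]) = a * h (xs[k := x]) + b * h (xs[k := y])) \<and>
    (\<forall>xs i j. set xs \<subseteq> Vsp l \<and> i < length xs \<and> j < length xs \<and> i \<noteq> j \<and> xs ! i = xs ! j
        \<longrightarrow> h xs = 0)"

text \<open>A finite graph with loops and multiple edges: vertex set V, edge set E,
  each edge e with its set of endpoints inc e (one element for a loop).\<close>
definition graph :: "'v set \<Rightarrow> 'e set \<Rightarrow> ('e \<Rightarrow> 'v set) \<Rightarrow> bool" where
  "graph V E inc \<longleftrightarrow> finite V \<and> finite E \<and>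
     (\<forall>e\<in>E. inc e \<subseteq> V \<and> 1 \<le> card (inc e) \<and> card (inc e) \<le> 2)"

text \<open>degree: loops count twice\<close>
definition deg :: "'e set \<Rightarrow> ('e \<Rightarrow> 'v set) \<Rightarrow> 'v \<Rightarrow> nat" where
  "deg E inc v = card {e\<in>E. v \<in> inc e} + card {e\<in>E. inc e = {v}}"

definition eulerian :: "'v set \<Rightarrow> 'e set \<Rightarrow> ('e \<Rightarrow> 'v set) \<Rightarrow> bool" where
  "eulerian V E inc \<longleftrightarrow> graph V E inc \<and> (\<forall>v\<in>V. even (deg E inc v))"

text \<open>An orientation assigns to each edge a pair (tail, head) of its endpoints.\<close>
definition orientation :: "'e set \<Rightarrow> ('e \<Rightarrow> 'v set) \<Rightarrow> ('e \<Rightarrow> 'v \<times> 'v) \<Rightarrow> bool" where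
  "orientation E inc \<omega> \<longleftrightarrow> (\<forall>e\<in>E. {fst (\<omega> e), snd (\<omega> e)} = inc e)"

definition eulerian_orientation ::
  "'v set \<Rightarrow> 'e set \<Rightarrow> ('e \<Rightarrow> 'v set) \<Rightarrow> ('e \<Rightarrow> 'v \<times> 'v) \<Rightarrow> bool" where
  "eulerian_orientation V E inc \<omega> \<longleftrightarrow> orientation E inc \<omega> \<and>
     (\<forall>v\<in>V. card {e\<in>E. snd (\<omega> e) = v} = card {e\<in>E. fst (\<omega> e) = v})"

text \<open>A local ordering is given by kin (label of the incoming arc of e at its head)
  and kout (label of the outgoing arc of e at its tail).  A loop at v gives
  one incoming and one outgoing arc at v.\<close>
definition compatible_ordering ::
  "'v set \<Rightarrow> 'e set \<Rightarrow> ('e \<Rightarrow> 'v set) \<Rightarrow> ('e \<Rightarrow> 'v \<times> 'v) \<Rightarrow> ('e \<Rightarrow> nat) \<Rightarrow> ('e \<Rightarrow> nat) \<Rightarrow> bool" where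
  "compatible_ordering V E inc \<omega> kin kout \<longleftrightarrow>
     (\<forall>v\<in>V. bij_betw kin {e\<in>E. snd (\<omega> e) = v} {i. odd i \<and> i < deg E inc v} \<and>
             bij_betw kout {e\<in>E. fst (\<omega> e) = v} {i. even i \<and> 0 < i \<and> i \<le> deg E inc v})"

definition follows :: "('e \<Rightarrow> 'v \<times> 'v) \<Rightarrow> ('e \<Rightarrow> nat) \<Rightarrow> ('e \<Rightarrow> nat) \<Rightarrow> 'e \<Rightarrow> 'e \<Rightarrow> bool" where
  "follows \<omega> kin kout e e' \<longleftrightarrow> fst (\<omega> e') = snd (\<omega> e) \<and> kout e' = kin e + 1"

definition kcircuit ::
  "'e set \<Rightarrow> ('e \<Rightarrow> 'v \<times> 'v) \<Rightarrow> ('e \<Rightarrow> nat) \<Rightarrow> ('e \<Rightarrow> nat) \<Rightarrow> 'e list \<Rightarrow> bool" where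
  "kcircuit E \<omega> kin kout es \<longleftrightarrow> es \<noteq> [] \<and> distinct es \<and> set es \<subseteq> E \<and>
     (\<forall>i < length es. follows \<omega> kin kout (es ! i) (es ! ((i + 1) mod length es)))"

text \<open>c(G,kappa): the number of kappa-circuits (a circuit is identified with its edge set,
  so cyclic rotations of the list are not counted twice).\<close>
definition ncirc :: "'e set \<Rightarrow> ('e \<Rightarrow> 'v \<times> 'v) \<Rightarrow> ('e \<Rightarrow> nat) \<Rightarrow> ('e \<Rightarrow> nat) \<Rightarrow> nat" where
  "ncirc E \<omega> kin kout = card {set es | es. kcircuit E \<omega> kin kout es}"

definition kinv_in :: "'e set \<Rightarrow> ('e \<Rightarrow> 'v \<times> 'v) \<Rightarrow> ('e \<Rightarrow> nat) \<Rightarrow> 'v \<Rightarrow> nat \<Rightarrow> 'e" where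
  "kinv_in E \<omega> kin v i = (THE e. e \<in> E \<and> snd (\<omega> e) = v \<and> kin e = i)"

definition kinv_out :: "'e set \<Rightarrow> ('e \<Rightarrow> 'v \<times> 'v) \<Rightarrow> ('e \<Rightarrow> nat) \<Rightarrow> 'v \<Rightarrow> nat \<Rightarrow> 'e" where
  "kinv_out E \<omega> kout v i = (THE e. e \<in> E \<and> fst (\<omega> e) = v \<and> kout e = i)"

text \<open>The tensor e_{g(kappa^{-1}(1))} (x) f_{g(kappa^{-1}(2))} (x) ... (x) f_{g(kappa^{-1}(d(v)))}
  at vertex v, as the list of its factors.\<close>
definition vertex_tensor ::
  "nat \<Rightarrow> 'e set \<Rightarrow> ('e \<Rightarrow> 'v set) \<Rightarrow> ('e \<Rightarrow> 'v \<times> 'v) \<Rightarrow> ('e \<Rightarrow> nat) \<Rightarrow> ('e \<Rightarrow> nat)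
    \<Rightarrow> ('e \<Rightarrow> nat) \<Rightarrow> 'v \<Rightarrow> (nat \<Rightarrow> complex) list" where
  "vertex_tensor l E inc \<omega> kin kout g v =
     concat (map (\<lambda>j. [evec (g (kinv_in E \<omega> kin v (2*j+1))),
                       fvec l (g (kinv_out E \<omega> kout v (2*j+2)))]) [0..<deg E inc v div 2])"

definition s_val ::
  "nat \<Rightarrow> ((nat \<Rightarrow> complex) list \<Rightarrow> complex) \<Rightarrow> ('e \<Rightarrow> nat) \<Rightarrow> 'v set \<Rightarrow> 'e set \<Rightarrow> ('e \<Rightarrow> 'v set)
    \<Rightarrow> ('e \<Rightarrow> 'v \<times> 'v) \<Rightarrow> ('e \<Rightarrow> nat) \<Rightarrow> ('e \<Rightarrow> nat) \<Rightarrow> complex" where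
  "s_val l h \<phi> V E inc \<omega> kin kout =
     (-1) ^ ncirc E \<omega> kin kout *
     (\<Sum>\<psi> \<in> PiE E (\<lambda>_. {0, l}).
        \<Prod>v\<in>V. h (vertex_tensor l E inc \<omega> kin kout (\<lambda>e. \<phi> e + \<psi> e) v))"

end

theory Submission
  imports Defs
begin


definition Lp :: "(nat \<Rightarrow> 'a) \<Rightarrow> (nat \<Rightarrow> 'a) \<Rightarrow> nat \<Rightarrow> 'a list" where
  "Lp p q m = map (\<lambda>i. if even i then p (i div 2) else q (i div 2)) [0..<2*m]"

lemma concat_pairs: "concat (map (\<lambda>j. [p j, q j]) [0..<m]) = Lp p q m"
proof (induction m)
  case 0 then show ?case by (simp add: Lp_def)
next
  case (Suc m)
  have e: "2 * Suc m = Suc (Suc (2*m))" by simp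
  have "[0..<2 * Suc m] = [0..<2*m] @ [2*m, 2*m+1]" unfolding e by simp
  then show ?case using Suc by (simp add: Lp_def)
qed

lemma Vsp_add: "x \<in> Vsp l \<Longrightarrow> y \<in> Vsp l \<Longrightarrow> (\<lambda>t. x t + y t) \<in> Vsp l"
  by (simp add: Vsp_def)
lemma Vsp_scale: "x \<in> Vsp l \<Longrightarrow> (\<lambda>t. c * x t) \<in> Vsp l"
  by (simp add: Vsp_def)
lemma evec_Vsp: "1 \<le> i \<Longrightarrow> i \<le> 2*l \<Longrightarrow> evec i \<in> Vsp l"
  by (auto simp: Vsp_def evec_def)
lemma fvec_Vsp: "1 \<le> i \<Longrightarrow> i \<le> 2*l \<Longrightarrow> fvec l i \<in> Vsp l"
  by (auto simp: Vsp_def evec_def fvec_def)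

lemma ext_lin: "exterior_form l h \<Longrightarrow> set xs \<subseteq> Vsp l \<Longrightarrow> k < length xs \<Longrightarrow> x \<in> Vsp l \<Longrightarrow> y \<in> Vsp l
  \<Longrightarrow> h (xs[k := (\<lambda>t. a * x t + b * y t)]) = a * h (xs[k := x]) + b * h (xs[k := y])"
  unfolding exterior_form_def apply (erule conjE) apply (erule allE[of _ xs], erule allE[of _ k], erule allE[of _ x], erule allE[of _ y], erule allE[of _ a], erule allE[of _ b])
  by simp

lemma ext_alt: "exterior_form l h \<Longrightarrow> set xs \<subseteq> Vsp l \<Longrightarrow> i < length xs \<Longrightarrow> j < length xs \<Longrightarrow> i \<noteq> j
  \<Longrightarrow> xs ! i = xs ! j \<Longrightarrow> h xs = 0"
  unfolding exterior_form_def by blast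

lemma set_upd_sub: "set xs \<subseteq> A \<Longrightarrow> x \<in> A \<Longrightarrow> set (xs[k := x]) \<subseteq> A"
  by (meson order.trans set_update_subset_insert insert_subset)

lemma ext_scale: assumes "exterior_form l h" "set xs \<subseteq> Vsp l" "k < length xs" "x \<in> Vsp l"
  shows "h (xs[k := (\<lambda>t. c * x t)]) = c * h (xs[k := x])"
proof -
  have "h (xs[k := (\<lambda>t. c * x t + 0 * x t)]) = c * h (xs[k := x]) + 0 * h (xs[k := x])"
    by (rule ext_lin[OF assms assms(4)])
  then show ?thesis by simp
qed

lemma ext_swap: assumes E: "exterior_form l h" and S: "set xs \<subseteq> Vsp l" and i: "i < length xs"
  and j: "j < length xs" and ij: "i \<noteq> j"
  shows "h (xs[i := xs ! j, j := xs ! i]) = - h xs"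
proof -
  define x where "x = xs ! i"
  define y where "y = xs ! j"
  have xV: "x \<in> Vsp l" using S i by (auto simp: x_def)
  have yV: "y \<in> Vsp l" using S j by (auto simp: y_def)
  define s where "s = (\<lambda>t. 1 * x t + 1 * y t)"
  have sV: "s \<in> Vsp l" using xV yV by (simp add: s_def Vsp_def)
  define ys where "ys = xs[i := s]"
  have ysS: "set ys \<subseteq> Vsp l" using S sV by (simp add: ys_def set_upd_sub)
  have 0: "h (ys[j := s]) = 0"
    by (rule ext_alt[OF E _ _ _ ij]) (use ysS sV i j ij in \<open>auto simp: ys_def set_upd_sub\<close>)
  have 1: "h (ys[j := s]) = 1 * h (ys[j := x]) + 1 * h (ys[j := y])"
    unfolding s_def by (rule ext_lin[OF E ysS _ xV yV]) (use j in \<open>simp add: ys_def\<close>)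
  have S2: "set (xs[j := x]) \<subseteq> Vsp l" using S xV by (simp add: set_upd_sub)
  have "ys[j := x] = (xs[j := x])[i := s]" using ij by (simp add: ys_def list_update_swap)
  then have 2: "h (ys[j := x]) = 1 * h ((xs[j := x])[i := x]) + 1 * h ((xs[j := x])[i := y])"
    using ext_lin[OF E S2 _ xV yV, of i 1 1] i unfolding s_def by simp
  have 3: "h ((xs[j := x])[i := x]) = 0"
    by (rule ext_alt[OF E _ _ _ ij]) (use S2 xV i j ij in \<open>auto simp: set_upd_sub\<close>)
  have 4: "(xs[j := x])[i := y] = xs[i := xs ! j, j := xs ! i]"
    using ij by (simp add: x_def y_def list_update_swap)
  have 5: "ys[j := y] = xs[i := s]" unfolding ys_def y_def by (metis list_update_id nth_list_update_neq ij)
  have 6: "h (xs[i := s]) = 1 * h (xs[i := x]) + 1 * h (xs[i := y])"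
    unfolding s_def by (rule ext_lin[OF E S i xV yV])
  have 7: "xs[i := x] = xs" by (simp add: x_def)
  have 8: "h (xs[i := y]) = 0"
    by (rule ext_alt[OF E _ _ _ ij]) (use S yV i j ij in \<open>auto simp: set_upd_sub y_def\<close>)
  show ?thesis using 0 1 2 3 4 5 6 7 8 by (simp add: algebra_simps add_eq_0_iff)
qed

lemma Lp_len[simp]: "length (Lp p q m) = 2*m" by (simp add: Lp_def)

lemma pair_step: assumes E: "exterior_form l h" and V: "\<forall>j<m. p j \<in> Vsp l \<and> q j \<in> Vsp l"
  and j0: "j0 < m"
  shows "h (Lp (p(j0 := (\<lambda>t. c * q j0 t))) (q(j0 := (\<lambda>t. d * p j0 t))) m) = - (c*d) * h (Lp p q m)"
proof -
  define zs where "zs = Lp p q m"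
  have zS: "set zs \<subseteq> Vsp l"
  proof
    fix z assume "z \<in> set zs"
    then obtain i where "i < 2*m" "z = (if even i then p (i div 2) else q (i div 2))"
      by (auto simp: zs_def Lp_def)
    then show "z \<in> Vsp l" using V by (auto split: if_splits)
  qed
  have z0: "zs ! (2*j0) = p j0" "zs ! (2*j0+1) = q j0" using j0 by (auto simp: zs_def Lp_def nth_append)
  have eq: "Lp (p(j0 := (\<lambda>t. c * q j0 t))) (q(j0 := (\<lambda>t. d * p j0 t))) m
      = zs[2*j0 := (\<lambda>t. c * q j0 t), 2*j0+1 := (\<lambda>t. d * p j0 t)]"
    by (rule nth_equalityI) (auto simp: zs_def Lp_def nth_list_update)
  have pV: "p j0 \<in> Vsp l" and qV: "q j0 \<in> Vsp l" using V j0 by auto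
  have l1: "2*j0+1 < length zs" "2*j0 < length zs" using j0 by (auto simp: zs_def)
  have s1: "set (zs[2*j0 := (\<lambda>t. c * q j0 t)]) \<subseteq> Vsp l" using zS qV by (simp add: set_upd_sub Vsp_scale)
  have "h (Lp (p(j0 := (\<lambda>t. c * q j0 t))) (q(j0 := (\<lambda>t. d * p j0 t))) m) = h (zs[2*j0 := (\<lambda>t. c * q j0 t), 2*j0+1 := (\<lambda>t. d * p j0 t)])"
    by (simp only: eq)
  also have "h (zs[2*j0 := (\<lambda>t. c * q j0 t), 2*j0+1 := (\<lambda>t. d * p j0 t)])
      = d * h (zs[2*j0 := (\<lambda>t. c * q j0 t), 2*j0+1 := p j0])"
    by (rule ext_scale[OF E s1]) (use l1 pV in auto)
  also have "zs[2*j0 := (\<lambda>t. c * q j0 t), 2*j0+1 := p j0] = (zs[2*j0+1 := p j0])[2*j0 := (\<lambda>t. c * q j0 t)]"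
    by (simp add: list_update_swap)
  also have "h ((zs[2*j0+1 := p j0])[2*j0 := (\<lambda>t. c * q j0 t)]) = c * h ((zs[2*j0+1 := p j0])[2*j0 := q j0])"
    by (rule ext_scale[OF E]) (use l1 pV qV zS in \<open>auto simp: set_upd_sub\<close>)
  also have "(zs[2*j0+1 := p j0])[2*j0 := q j0] = zs[2*j0 := zs ! (2*j0+1), 2*j0+1 := zs ! (2*j0)]"
    unfolding z0 by (rule list_update_swap) simp
  also have "h (zs[2*j0 := zs ! (2*j0+1), 2*j0+1 := zs ! (2*j0)]) = - h zs"
    by (rule ext_swap[OF E zS]) (use l1 in auto)
  finally have X: "h (Lp (p(j0 := (\<lambda>t. c * q j0 t))) (q(j0 := (\<lambda>t. d * p j0 t))) m) = d * (c * - h zs)" .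
  show ?thesis unfolding X zs_def by simp
qed

lemma pairs_multi: assumes E: "exterior_form l h" and V: "\<forall>j<m. p j \<in> Vsp l \<and> q j \<in> Vsp l"
  and J: "J \<subseteq> {..<m}"
  shows "h (Lp (\<lambda>j. if j \<in> J then (\<lambda>t. c j * q j t) else p j) (\<lambda>j. if j \<in> J then (\<lambda>t. d j * p j t) else q j) m)
    = (\<Prod>j\<in>J. - (c j * d j)) * h (Lp p q m)"
proof -
  have fin: "finite J" using J finite_subset by blast
  show ?thesis using fin J
  proof (induction J rule: finite_induct)
    case empty then show ?case by simp
  next
    case (insert a F)
    define P where "P = (\<lambda>j. if j \<in> F then (\<lambda>t. c j * q j t) else p j)"
    define Q where "Q = (\<lambda>j. if j \<in> F then (\<lambda>t. d j * p j t) else q j)"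
    have VPQ: "\<forall>j<m. P j \<in> Vsp l \<and> Q j \<in> Vsp l" using V by (auto simp: P_def Q_def Vsp_scale)
    have e1: "(\<lambda>j. if j \<in> insert a F then (\<lambda>t. c j * q j t) else p j) = P(a := (\<lambda>t. c a * Q a t))"
      using insert(2) by (auto simp: P_def Q_def)
    have e2: "(\<lambda>j. if j \<in> insert a F then (\<lambda>t. d j * p j t) else q j) = Q(a := (\<lambda>t. d a * P a t))"
      using insert(2) by (auto simp: P_def Q_def)
    have "a < m" using insert by auto
    then have "h (Lp (P(a := (\<lambda>t. c a * Q a t))) (Q(a := (\<lambda>t. d a * P a t))) m) = - (c a * d a) * h (Lp P Q m)"
      by (rule pair_step[OF E VPQ])
    then show ?case using insert e1 e2 by (simp add: P_def Q_def)
  qed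
qed



lemma div2_a: "j < x div 2 \<Longrightarrow> 2*j+2 \<le> (x::nat)"
  using times_div_less_eq_dividend[of 2 x] by linarith
lemma div2_b: "2*j+1 < (x::nat) \<Longrightarrow> j < x div 2"
proof -
  assume a: "2*j+1 < x"
  have "x = 2 * (x div 2) + x mod 2" by simp
  moreover have "x mod 2 < 2" by simp
  ultimately show ?thesis using a by linarith
qed

definition cyc :: "('a \<Rightarrow> 'a \<Rightarrow> bool) \<Rightarrow> 'a list \<Rightarrow> bool" where
  "cyc R es \<longleftrightarrow> es \<noteq> [] \<and> (\<forall>i<length es. R (es ! i) (es ! ((i + 1) mod length es)))"

lemma kcircuit_cyc: "kcircuit E \<omega> kin kout es \<longleftrightarrow> distinct es \<and> set es \<subseteq> E \<and> cyc (follows \<omega> kin kout) es"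
  by (auto simp: kcircuit_def cyc_def)

lemma cyc_shift:
  assumes ce: "cyc R es" and cc: "cyc R cs" and sA: "set es \<subseteq> A" and cA: "set cs \<subseteq> A"
    and ru: "\<forall>x\<in>A. \<forall>y\<in>A. \<forall>y'\<in>A. R x y \<longrightarrow> R x y' \<longrightarrow> y = y'"
    and i: "i < length es" and k: "k < length cs" and eq: "es ! i = cs ! k"
  shows "es ! ((i + t) mod length es) = cs ! ((k + t) mod length cs)"
proof (induction t)
  case 0 then show ?case using i k eq by simp
next
  case (Suc t)
  define n where "n = length es"
  define m where "m = length cs"
  have n0: "n > 0" using i n_def by linarith
  have m0: "m > 0" using k m_def by linarith
  define a where "a = (i + t) mod n"
  define b where "b = (k + t) mod m"
  have an: "a < n" using n0 a_def by simp
  have bm: "b < m" using m0 b_def by simp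
  have r1: "R (es ! a) (es ! ((a + 1) mod n))" using ce an by (simp add: cyc_def n_def)
  have r2: "R (cs ! b) (cs ! ((b + 1) mod m))" using cc bm by (simp add: cyc_def m_def)
  have a1: "(a + 1) mod n = (i + Suc t) mod n" by (simp add: a_def mod_Suc_eq)
  have b1: "(b + 1) mod m = (k + Suc t) mod m" by (simp add: b_def mod_Suc_eq)
  have IH: "es ! a = cs ! b" using Suc by (simp add: a_def b_def n_def m_def)
  have inA: "es ! a \<in> A" "es ! ((a + 1) mod n) \<in> A" "cs ! ((b + 1) mod m) \<in> A"
    using sA cA an n0 m0 by (auto simp: n_def m_def)
  have "es ! ((a + 1) mod n) = cs ! ((b + 1) mod m)"
    using ru inA r1 r2 IH by metis
  then show ?case using a1 b1 by (simp add: n_def m_def)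
qed

lemma cyc_meet1:
  assumes ce: "cyc R es" and cc: "cyc R cs" and sA: "set es \<subseteq> A" and cA: "set cs \<subseteq> A"
    and ru: "\<forall>x\<in>A. \<forall>y\<in>A. \<forall>y'\<in>A. R x y \<longrightarrow> R x y' \<longrightarrow> y = y'"
    and x1: "x \<in> set es" and x2: "x \<in> set cs"
  shows "set es \<subseteq> set cs"
proof
  fix y assume "y \<in> set es"
  then obtain p where p: "p < length es" "y = es ! p" by (auto simp: in_set_conv_nth)
  obtain i where i: "i < length es" "es ! i = x" using x1 by (auto simp: in_set_conv_nth)
  obtain k where k: "k < length cs" "cs ! k = x" using x2 by (auto simp: in_set_conv_nth)
  have "es ! ((i + (p + length es - i)) mod length es) = cs ! ((k + (p + length es - i)) mod length cs)"
    by (rule cyc_shift[OF ce cc sA cA ru i(1) k(1)]) (use i k in simp)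
  moreover have "(i + (p + length es - i)) mod length es = p" using i p by simp
  moreover have "length cs > 0" using k by linarith
  then have "(k + (p + length es - i)) mod length cs < length cs" by simp
  ultimately show "y \<in> set cs" using p by (metis nth_mem)
qed

lemma cyc_meet:
  assumes ce: "cyc R es" and cc: "cyc R cs" and sA: "set es \<subseteq> A" and cA: "set cs \<subseteq> A"
    and ru: "\<forall>x\<in>A. \<forall>y\<in>A. \<forall>y'\<in>A. R x y \<longrightarrow> R x y' \<longrightarrow> y = y'"
    and x1: "x \<in> set es" and x2: "x \<in> set cs"
  shows "set es = set cs"
  using cyc_meet1[OF ce cc sA cA ru x1 x2] cyc_meet1[OF cc ce cA sA ru x2 x1] by blast

lemma cyc_rev: assumes "cyc R es" shows "cyc (\<lambda>x y. R y x) (rev es)"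
  unfolding cyc_def
proof (intro conjI allI impI)
  show "rev es \<noteq> []" using assms by (simp add: cyc_def)
  fix i assume i: "i < length (rev es)"
  define n where "n = length es"
  have i': "i < n" using i by (simp add: n_def)
  define k where "k = n - Suc ((i + 1) mod n)"
  have kn: "k < n" using i' by (simp add: k_def)
  have k1: "(k + 1) mod n = n - Suc i"
  proof (cases "i + 1 < n")
    case True then show ?thesis by (simp add: k_def)
  next
    case False then have "i + 1 = n" using i' by simp
    then show ?thesis by (simp add: k_def)
  qed
  have "R (es ! k) (es ! ((k + 1) mod n))" using assms kn by (simp add: cyc_def n_def)
  moreover have "(i + 1) mod n < n" using i' by simp
  then have "rev es ! ((i + 1) mod length (rev es)) = es ! k"
    by (simp add: rev_nth k_def n_def)
  moreover have "rev es ! i = es ! (n - Suc i)" using i' by (simp add: rev_nth n_def)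
  ultimately show "R (rev es ! ((i + 1) mod length (rev es))) (rev es ! i)" using k1 by simp
qed

lemma cyc_cong: "cyc R es \<Longrightarrow> (\<forall>x\<in>set es. \<forall>y\<in>set es. R x y \<longrightarrow> R' x y) \<Longrightarrow> cyc R' es"
  unfolding cyc_def by (metis length_greater_0_conv mod_less_divisor nth_mem)

definition cidx :: "'a list \<Rightarrow> 'a \<Rightarrow> nat" where
  "cidx cs e = (THE k. k < length cs \<and> cs ! k = e)"
definition nxt :: "'a list \<Rightarrow> 'a \<Rightarrow> 'a" where
  "nxt cs e = (if e \<in> set cs then cs ! ((cidx cs e + 1) mod length cs) else e)"
definition prv :: "'a list \<Rightarrow> 'a \<Rightarrow> 'a" where
  "prv cs e = (if e \<in> set cs then cs ! ((cidx cs e + length cs - 1) mod length cs) else e)"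

lemma cidx_nth: "distinct cs \<Longrightarrow> k < length cs \<Longrightarrow> cidx cs (cs ! k) = k"
  unfolding cidx_def by (rule the_equality) (auto simp: nth_eq_iff_index_eq)

lemma nxt_nth: "distinct cs \<Longrightarrow> k < length cs \<Longrightarrow> nxt cs (cs ! k) = cs ! ((k + 1) mod length cs)"
  by (simp add: nxt_def cidx_nth)
lemma prv_nth: "distinct cs \<Longrightarrow> k < length cs \<Longrightarrow> prv cs (cs ! k) = cs ! ((k + length cs - 1) mod length cs)"
  by (simp add: prv_def cidx_nth)
lemma nxt_out: "e \<notin> set cs \<Longrightarrow> nxt cs e = e" by (simp add: nxt_def)
lemma prv_out: "e \<notin> set cs \<Longrightarrow> prv cs e = e" by (simp add: prv_def)

lemma arith1: "k < (n::nat) \<Longrightarrow> ((k + 1) mod n + n - 1) mod n = k"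
proof (cases "k + 1 < n")
  case True then show ?thesis by simp
next
  case False
  assume "k < n" then have "k + 1 = n" using False by simp
  then show ?thesis by simp
qed

lemma arith2: "k < (n::nat) \<Longrightarrow> ((k + n - 1) mod n + 1) mod n = k"
proof (cases k)
  case 0 assume "k < n" then show ?thesis using 0 by simp
next
  case (Suc k') assume "k < n"
  then have "(k + n - 1) mod n = k'" using Suc by (simp add: mod_if)
  then show ?thesis using Suc \<open>k < n\<close> by simp
qed

lemma nxt_in: "e \<in> set cs \<Longrightarrow> nxt cs e \<in> set cs"
  using length_pos_if_in_set[of e cs] by (auto simp: nxt_def)
lemma prv_in: "e \<in> set cs \<Longrightarrow> prv cs e \<in> set cs"
  using length_pos_if_in_set[of e cs] by (auto simp: prv_def)

lemma prv_nxt: assumes "distinct cs" shows "prv cs (nxt cs e) = e"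
proof (cases "e \<in> set cs")
  case True
  then obtain k where k: "k < length cs" "e = cs ! k" by (auto simp: in_set_conv_nth)
  have "(k + 1) mod length cs < length cs" using k by (metis mod_less_divisor not_less0 gr0I)
  then show ?thesis using k assms arith1[of k "length cs"] by (simp add: nxt_nth prv_nth)
qed (simp add: nxt_out prv_out)

lemma nxt_prv: assumes "distinct cs" shows "nxt cs (prv cs e) = e"
proof (cases "e \<in> set cs")
  case True
  then obtain k where k: "k < length cs" "e = cs ! k" by (auto simp: in_set_conv_nth)
  have "(k + length cs - 1) mod length cs < length cs" using k by (metis mod_less_divisor not_less0 gr0I)
  then show ?thesis using k assms arith2[of k "length cs"] by (simp add: nxt_nth prv_nth)
qed (simp add: nxt_out prv_out)

definition flp :: "'a list \<Rightarrow> nat \<Rightarrow> ('a \<Rightarrow> nat) \<Rightarrow> 'a \<Rightarrow> nat" where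
  "flp cs l \<psi> e = (if e \<in> set cs then l - \<psi> e else \<psi> e)"

definition sg :: "('a \<Rightarrow> nat) \<Rightarrow> 'a \<Rightarrow> complex" where
  "sg \<psi> e = (if \<psi> e = 0 then 1 else -1)"

lemma flip_evec: "1 \<le> p \<Longrightarrow> p \<le> l \<Longrightarrow> s \<in> {0,l} \<Longrightarrow>
    evec (p + (l - s)) = (\<lambda>t. - (if s = 0 then 1 else -1) * fvec l (p + s) t)"
  by (auto simp: fvec_def)

lemma flip_fvec: "1 \<le> p \<Longrightarrow> p \<le> l \<Longrightarrow> s \<in> {0,l} \<Longrightarrow>
    fvec l (p + (l - s)) = (\<lambda>t. (if s = 0 then 1 else -1) * evec (p + s) t)"
  by (auto simp: fvec_def)

lemma Lp_cong: "(\<And>j. j < m \<Longrightarrow> p j = p' j \<and> q j = q' j) \<Longrightarrow> Lp p q m = Lp p' q' m"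
  unfolding Lp_def by (rule map_cong) auto



context
  fixes l :: nat
    and h :: "(nat \<Rightarrow> complex) list \<Rightarrow> complex"
    and V :: "'v set" and E :: "'e set" and inc :: "'e \<Rightarrow> 'v set"
    and \<omega> \<omega>' :: "'e \<Rightarrow> 'v \<times> 'v"
    and kin kout kin' kout' :: "'e \<Rightarrow> nat"
    and \<phi> :: "'e \<Rightarrow> nat"
    and C :: "'e list"
  assumes ext: "exterior_form l h"
    and eul: "eulerian V E inc"
    and eo: "eulerian_orientation V E inc \<omega>"
    and co: "compatible_ordering V E inc \<omega> kin kout"
    and phi: "\<phi> \<in> E \<rightarrow> {1..l}"
    and kc: "kcircuit E \<omega> kin kout C"
    and om': "\<forall>e\<in>E. \<omega>' e = (if e \<in> set C then prod.swap (\<omega> e) else \<omega> e)"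
    and kC: "\<forall>i < length C. kout' (C ! i) = kout (C ! ((i + 1) mod length C)) \<and>
                        kin' (C ! ((i + 1) mod length C)) = kin (C ! i)"
    and kN: "\<forall>e \<in> E - set C. kin' e = kin e \<and> kout' e = kout e"
begin

lemma CE: "set C \<subseteq> E" and dC: "distinct C" and Cne: "C \<noteq> []"
  using kc by (auto simp: kcircuit_def)

lemma npos: "length C > 0" using Cne by simp

lemma fol: "k < length C \<Longrightarrow> follows \<omega> kin kout (C ! k) (C ! ((k + 1) mod length C))"
  using kc by (auto simp: kcircuit_def)

lemma finE: "finite E" and finV: "finite V"
  using eul by (auto simp: eulerian_def graph_def)

lemma ends: assumes e: "e \<in> E" shows "fst (\<omega> e) \<in> V \<and> snd (\<omega> e) \<in> V"
proof -
  have 1: "{fst (\<omega> e), snd (\<omega> e)} = inc e" using eo e by (simp add: eulerian_orientation_def orientation_def)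
  have 2: "inc e \<subseteq> V" using eul e by (simp add: eulerian_def graph_def)
  from 1 2 show ?thesis by auto
qed

lemma phiE: "e \<in> E \<Longrightarrow> 1 \<le> \<phi> e \<and> \<phi> e \<le> l" using phi by auto

lemma lpos: "1 \<le> l"
proof -
  have "hd C \<in> E" using CE hd_in_set[OF Cne] by auto
  then show ?thesis using phiE[of "hd C"] by linarith
qed

lemma kin_bij: "v \<in> V \<Longrightarrow> bij_betw kin {e\<in>E. snd (\<omega> e) = v} {i. odd i \<and> i < deg E inc v}"
  using co by (simp add: compatible_ordering_def)
lemma kout_bij: "v \<in> V \<Longrightarrow> bij_betw kout {e\<in>E. fst (\<omega> e) = v} {i. even i \<and> 0 < i \<and> i \<le> deg E inc v}"
  using co by (simp add: compatible_ordering_def)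

lemma kin_inj: "x \<in> E \<Longrightarrow> y \<in> E \<Longrightarrow> snd (\<omega> x) = snd (\<omega> y) \<Longrightarrow> kin x = kin y \<Longrightarrow> x = y"
  using kin_bij[of "snd (\<omega> x)"] ends[of x] unfolding bij_betw_def inj_on_def by auto
lemma kout_inj: "x \<in> E \<Longrightarrow> y \<in> E \<Longrightarrow> fst (\<omega> x) = fst (\<omega> y) \<Longrightarrow> kout x = kout y \<Longrightarrow> x = y"
  using kout_bij[of "fst (\<omega> x)"] ends[of x] unfolding bij_betw_def inj_on_def by auto

lemma nxtE: "e \<in> E \<Longrightarrow> nxt C e \<in> E"
  using CE nxt_in[of e C] nxt_out[of e C] by (cases "e \<in> set C") auto
lemma prvE: "e \<in> E \<Longrightarrow> prv C e \<in> E"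
  using CE prv_in[of e C] prv_out[of e C] by (cases "e \<in> set C") auto

lemma om'_in: assumes e: "e \<in> E" shows "snd (\<omega>' e) = snd (\<omega> (prv C e)) \<and> kin' e = kin (prv C e)"
proof (cases "e \<in> set C")
  case True
  then obtain k where k: "k < length C" "e = C ! k" by (auto simp: in_set_conv_nth)
  define k' where "k' = (k + length C - 1) mod length C"
  have k'n: "k' < length C" using npos by (simp add: k'_def)
  have k'1: "(k' + 1) mod length C = k" using arith2[OF k(1)] by (simp add: k'_def)
  have p: "prv C e = C ! k'" using k dC by (simp add: prv_nth k'_def)
  have f: "follows \<omega> kin kout (C ! k') (C ! k)" using fol[OF k'n] k'1 by simp
  have "kin' (C ! k) = kin (C ! k')" using kC k'n k'1 by auto
  then show ?thesis using f p k om' e True by (auto simp: follows_def)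
next
  case False then show ?thesis using om' kN e by (simp add: prv_out)
qed

lemma om'_out: assumes e: "e \<in> E" shows "fst (\<omega>' e) = fst (\<omega> (nxt C e)) \<and> kout' e = kout (nxt C e)"
proof (cases "e \<in> set C")
  case True
  then obtain k where k: "k < length C" "e = C ! k" by (auto simp: in_set_conv_nth)
  have p: "nxt C e = C ! ((k + 1) mod length C)" using k dC by (simp add: nxt_nth)
  have f: "follows \<omega> kin kout (C ! k) (C ! ((k + 1) mod length C))" using fol[OF k(1)] .
  have "kout' (C ! k) = kout (C ! ((k + 1) mod length C))" using kC k by auto
  then show ?thesis using f p k om' e True by (auto simp: follows_def)
next
  case False then show ?thesis using om' kN e by (simp add: nxt_out)
qed

lemma fol': "x \<in> E \<Longrightarrow> y \<in> E \<Longrightarrow>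
   follows \<omega>' kin' kout' x y \<longleftrightarrow> follows \<omega> kin kout (prv C x) (nxt C y)"
  using om'_in[of x] om'_out[of y] by (simp add: follows_def)

lemma kinv_in_old: assumes v: "v \<in> V" and i: "odd i" "i < deg E inc v"
  shows "kinv_in E \<omega> kin v i \<in> E \<and> snd (\<omega> (kinv_in E \<omega> kin v i)) = v \<and> kin (kinv_in E \<omega> kin v i) = i"
proof -
  have "i \<in> kin ` {e\<in>E. snd (\<omega> e) = v}" using kin_bij[OF v] i by (simp add: bij_betw_def)
  then obtain e where e: "e \<in> E" "snd (\<omega> e) = v" "kin e = i" by auto
  have "kinv_in E \<omega> kin v i = e" unfolding kinv_in_def
    by (rule the_equality) (use e kin_inj in auto)
  then show ?thesis using e by simp
qed

lemma kinv_out_old: assumes v: "v \<in> V" and i: "even i" "0 < i" "i \<le> deg E inc v"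
  shows "kinv_out E \<omega> kout v i \<in> E \<and> fst (\<omega> (kinv_out E \<omega> kout v i)) = v \<and> kout (kinv_out E \<omega> kout v i) = i"
proof -
  have "i \<in> kout ` {e\<in>E. fst (\<omega> e) = v}" using kout_bij[OF v] i by (simp add: bij_betw_def)
  then obtain e where e: "e \<in> E" "fst (\<omega> e) = v" "kout e = i" by auto
  have "kinv_out E \<omega> kout v i = e" unfolding kinv_out_def
    by (rule the_equality) (use e kout_inj in auto)
  then show ?thesis using e by simp
qed

lemma kinv_in_new: assumes v: "v \<in> V" and i: "odd i" "i < deg E inc v"
  shows "kinv_in E \<omega>' kin' v i = nxt C (kinv_in E \<omega> kin v i)"
proof -
  define a where "a = kinv_in E \<omega> kin v i"
  have a: "a \<in> E" "snd (\<omega> a) = v" "kin a = i" using kinv_in_old[OF v i] by (auto simp: a_def)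
  have na: "nxt C a \<in> E" using nxtE a by simp
  show ?thesis unfolding kinv_in_def[of E \<omega>'] a_def[symmetric]
  proof (rule the_equality)
    show "nxt C a \<in> E \<and> snd (\<omega>' (nxt C a)) = v \<and> kin' (nxt C a) = i"
      using om'_in[OF na] prv_nxt[OF dC] a na by simp
  next
    fix e assume e: "e \<in> E \<and> snd (\<omega>' e) = v \<and> kin' e = i"
    then have "prv C e = a" using om'_in[of e] prvE[of e] a kin_inj by auto
    then show "e = nxt C a" using nxt_prv[OF dC] by metis
  qed
qed

lemma kinv_out_new: assumes v: "v \<in> V" and i: "even i" "0 < i" "i \<le> deg E inc v"
  shows "kinv_out E \<omega>' kout' v i = prv C (kinv_out E \<omega> kout v i)"
proof -
  define a where "a = kinv_out E \<omega> kout v i"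
  have a: "a \<in> E" "fst (\<omega> a) = v" "kout a = i" using kinv_out_old[OF v i] by (auto simp: a_def)
  have na: "prv C a \<in> E" using prvE a by simp
  show ?thesis unfolding kinv_out_def[of E \<omega>'] a_def[symmetric]
  proof (rule the_equality)
    show "prv C a \<in> E \<and> fst (\<omega>' (prv C a)) = v \<and> kout' (prv C a) = i"
      using om'_out[OF na] nxt_prv[OF dC] a na by simp
  next
    fix e assume e: "e \<in> E \<and> fst (\<omega>' e) = v \<and> kout' e = i"
    then have "nxt C e = a" using om'_out[of e] nxtE[of e] a kout_inj by auto
    then show "e = prv C a" using prv_nxt[OF dC] by metis
  qed
qed

lemma vertex:
  assumes psi: "\<psi> \<in> PiE E (\<lambda>_. {0, l})" and v: "v \<in> V"
  shows "h (vertex_tensor l E inc \<omega>' kin' kout' (\<lambda>e. \<phi> e + flp C l \<psi> e) v)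
       = (\<Prod>e\<in>{e\<in>E. snd (\<omega> e) = v}. (if e \<in> set C then sg \<psi> e * sg \<psi> (nxt C e) else 1))
         * h (vertex_tensor l E inc \<omega> kin kout (\<lambda>e. \<phi> e + \<psi> e) v)"
proof -
  define m where "m = deg E inc v div 2"
  define a where "a = (\<lambda>j. kinv_in E \<omega> kin v (2*j+1))"
  define b where "b = (\<lambda>j. kinv_out E \<omega> kout v (2*j+2))"
  define g where "g = (\<lambda>e. \<phi> e + \<psi> e)"
  define g2 where "g2 = (\<lambda>e. \<phi> e + flp C l \<psi> e)"
  define F where "F = (\<lambda>e. if e \<in> set C then sg \<psi> e * sg \<psi> (nxt C e) else 1)"
  have psiE: "\<And>e. e \<in> E \<Longrightarrow> \<psi> e \<in> {0,l}" using psi by (auto simp: PiE_iff)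
  have dj: "\<And>j. j < m \<Longrightarrow> 2*j+1 < deg E inc v \<and> 2*j+2 \<le> deg E inc v"
    unfolding m_def using div2_a by fastforce
  have aP: "\<And>j. j < m \<Longrightarrow> a j \<in> E \<and> snd (\<omega> (a j)) = v \<and> kin (a j) = 2*j+1"
    unfolding a_def using kinv_in_old[OF v] dj by simp
  have bP: "\<And>j. j < m \<Longrightarrow> b j \<in> E \<and> fst (\<omega> (b j)) = v \<and> kout (b j) = 2*j+2"
    unfolding b_def using kinv_out_old[OF v] dj by simp
  have ain: "nxt C (a j) = b j \<and> b j \<in> set C" if j: "j < m" "a j \<in> set C" for j
  proof -
    obtain k where k: "k < length C" "a j = C ! k" using j(2) by (auto simp: in_set_conv_nth)
    have f: "follows \<omega> kin kout (C ! k) (C ! ((k + 1) mod length C))" by (rule fol[OF k(1)])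
    have nx: "nxt C (a j) = C ! ((k + 1) mod length C)" using k dC by (simp add: nxt_nth)
    have inE: "C ! ((k + 1) mod length C) \<in> E" using CE npos by (auto intro: nth_mem)
    have f': "fst (\<omega> (C ! ((k + 1) mod length C))) = v" "kout (C ! ((k + 1) mod length C)) = 2*j+2"
      using f aP[OF j(1)] unfolding follows_def k(2)[symmetric] by simp_all
    have "C ! ((k + 1) mod length C) = b j" by (rule kout_inj[OF inE]) (use bP[OF j(1)] f' in simp_all)
    then show ?thesis using nx j(2) nxt_in by metis
  qed
  have bin: "a j \<in> set C" if j: "j < m" "b j \<in> set C" for j
  proof -
    obtain k where k: "k < length C" "b j = C ! k" using j(2) by (auto simp: in_set_conv_nth)
    define k' where "k' = (k + length C - 1) mod length C"
    have k'n: "k' < length C" using npos by (simp add: k'_def)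
    have k'1: "(k' + 1) mod length C = k" using arith2[OF k(1)] by (simp add: k'_def)
    have f: "follows \<omega> kin kout (C ! k') (C ! k)" using fol[OF k'n] k'1 by simp
    have inE: "C ! k' \<in> E" using CE k'n by (auto intro: nth_mem)
    have f': "snd (\<omega> (C ! k')) = v" "kin (C ! k') = 2*j+1"
      using f bP[OF j(1)] unfolding follows_def k(2)[symmetric] by simp_all
    have "C ! k' = a j" by (rule kin_inj[OF inE]) (use aP[OF j(1)] f' in simp_all)
    then have "a j = C ! k'" by simp
    then show ?thesis using k'n by simp
  qed
  have old: "vertex_tensor l E inc \<omega> kin kout (\<lambda>e. \<phi> e + \<psi> e) v = Lp (\<lambda>j. evec (g (a j))) (\<lambda>j. fvec l (g (b j))) m"
    unfolding vertex_tensor_def a_def b_def g_def m_def by (rule concat_pairs)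
  have "vertex_tensor l E inc \<omega>' kin' kout' (\<lambda>e. \<phi> e + flp C l \<psi> e) v
     = Lp (\<lambda>j. evec (g2 (kinv_in E \<omega>' kin' v (2*j+1)))) (\<lambda>j. fvec l (g2 (kinv_out E \<omega>' kout' v (2*j+2)))) m"
    unfolding vertex_tensor_def g2_def m_def by (rule concat_pairs)
  also have "\<dots> = Lp (\<lambda>j. evec (g2 (nxt C (a j)))) (\<lambda>j. fvec l (g2 (prv C (b j)))) m"
    by (rule Lp_cong) (use kinv_in_new[OF v] kinv_out_new[OF v] dj in \<open>simp add: a_def b_def\<close>)
  finally have new: "vertex_tensor l E inc \<omega>' kin' kout' (\<lambda>e. \<phi> e + flp C l \<psi> e) v
     = Lp (\<lambda>j. evec (g2 (nxt C (a j)))) (\<lambda>j. fvec l (g2 (prv C (b j)))) m" .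
  define J where "J = {j. j < m \<and> a j \<in> set C}"
  define c where "c = (\<lambda>j. - sg \<psi> (b j))"
  define d where "d = (\<lambda>j. sg \<psi> (a j))"
  define p where "p = (\<lambda>j. evec (g (a j)))"
  define q where "q = (\<lambda>j. fvec l (g (b j)))"
  have new2: "Lp (\<lambda>j. evec (g2 (nxt C (a j)))) (\<lambda>j. fvec l (g2 (prv C (b j)))) m
        = Lp (\<lambda>j. if j \<in> J then (\<lambda>t. c j * q j t) else p j) (\<lambda>j. if j \<in> J then (\<lambda>t. d j * p j t) else q j) m"
  proof (rule Lp_cong)
    fix j assume j: "j < m"
    show "evec (g2 (nxt C (a j))) = (if j \<in> J then (\<lambda>t. c j * q j t) else p j) \<and>
          fvec l (g2 (prv C (b j))) = (if j \<in> J then (\<lambda>t. d j * p j t) else q j)"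
    proof (cases "a j \<in> set C")
      case True
      have 1: "nxt C (a j) = b j" "b j \<in> set C" using ain[OF j True] by auto
      have 2: "prv C (b j) = a j" using 1(1) prv_nxt[OF dC, of "a j"] by simp
      have jJ: "j \<in> J" using j True by (simp add: J_def)
      have e1: "evec (g2 (b j)) = (\<lambda>t. c j * q j t)"
        using flip_evec[of "\<phi> (b j)" l "\<psi> (b j)"] phiE[of "b j"] psiE[of "b j"] bP[OF j] 1(2)
        by (simp add: g2_def g_def flp_def c_def q_def sg_def)
      have e2: "fvec l (g2 (a j)) = (\<lambda>t. d j * p j t)"
        using flip_fvec[of "\<phi> (a j)" l "\<psi> (a j)"] phiE[of "a j"] psiE[of "a j"] aP[OF j] True
        by (simp add: g2_def g_def flp_def d_def p_def sg_def)
      show ?thesis using 1 2 jJ e1 e2 by simp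
    next
      case False
      have 1: "b j \<notin> set C" using bin[OF j] False by blast
      have jJ: "j \<notin> J" using False by (simp add: J_def)
      show ?thesis using False 1 jJ by (simp add: nxt_out prv_out g2_def g_def flp_def p_def q_def)
    qed
  qed
  have gE: "1 \<le> g e \<and> g e \<le> 2*l" if "e \<in> E" for e
    using phiE[OF that] psiE[OF that] by (auto simp: g_def)
  have VV: "\<forall>j<m. p j \<in> Vsp l \<and> q j \<in> Vsp l"
  proof (intro allI impI conjI)
    fix j assume j: "j < m"
    have 1: "1 \<le> g (a j)" "g (a j) \<le> 2*l" using gE aP[OF j] by auto
    have 2: "1 \<le> g (b j)" "g (b j) \<le> 2*l" using gE bP[OF j] by auto
    show "p j \<in> Vsp l" unfolding p_def by (rule evec_Vsp[OF 1])
    show "q j \<in> Vsp l" unfolding q_def by (rule fvec_Vsp[OF 2])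
  qed
  have H: "h (Lp (\<lambda>j. if j \<in> J then (\<lambda>t. c j * q j t) else p j) (\<lambda>j. if j \<in> J then (\<lambda>t. d j * p j t) else q j) m)
      = (\<Prod>j\<in>J. - (c j * d j)) * h (Lp p q m)"
    by (rule pairs_multi[OF ext VV, of J c d]) (auto simp: J_def)
  have prod1: "(\<Prod>j<m. F (a j)) = (\<Prod>j\<in>J. - (c j * d j))"
  proof -
    have "(\<Prod>j<m. F (a j)) = (\<Prod>j\<in>J. F (a j))"
      by (rule prod.mono_neutral_right) (auto simp: J_def F_def)
    also have "\<dots> = (\<Prod>j\<in>J. - (c j * d j))"
    proof (rule prod.cong)
      fix j assume "j \<in> J"
      then have j: "j < m" "a j \<in> set C" by (auto simp: J_def)
      show "F (a j) = - (c j * d j)" using ain[OF j] j by (simp add: F_def c_def d_def)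
    qed simp
    finally show ?thesis .
  qed
  have bij: "bij_betw a {..<m} {e\<in>E. snd (\<omega> e) = v}"
    unfolding bij_betw_def
  proof
    show "inj_on a {..<m}"
    proof (rule inj_onI)
      fix x y assume xy: "x \<in> {..<m}" "y \<in> {..<m}" "a x = a y"
      have "kin (a x) = 2*x+1" using aP xy(1) by blast
      moreover have "kin (a y) = 2*y+1" using aP xy(2) by blast
      moreover have "kin (a x) = kin (a y)" using xy(3) by (rule arg_cong)
      ultimately show "x = y" by linarith
    qed
    show "a ` {..<m} = {e\<in>E. snd (\<omega> e) = v}"
    proof
      show "a ` {..<m} \<subseteq> {e\<in>E. snd (\<omega> e) = v}"
      proof
        fix e assume "e \<in> a ` {..<m}"
        then obtain j where j: "j < m" "e = a j" by auto
        then show "e \<in> {e\<in>E. snd (\<omega> e) = v}" using aP[OF j(1)] by simp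
      qed
      show "{e\<in>E. snd (\<omega> e) = v} \<subseteq> a ` {..<m}"
      proof
        fix e assume e: "e \<in> {e\<in>E. snd (\<omega> e) = v}"
        then have "kin e \<in> {i. odd i \<and> i < deg E inc v}"
          using kin_bij[OF v] by (auto simp: bij_betw_def)
        then have ke: "odd (kin e)" "kin e < deg E inc v" by auto
        define j where "j = kin e div 2"
        have j1: "2*j+1 = kin e" using ke(1) by (simp add: j_def)
        have jm: "j < m" using ke j1 div2_b unfolding m_def by metis
        have A: "a j \<in> E" "snd (\<omega> (a j)) = v" "kin (a j) = 2*j+1" using aP[OF jm] by simp_all
        have "a j = e" by (rule kin_inj) (use A e j1 in simp_all)
        then show "e \<in> a ` {..<m}" using jm by blast
      qed
    qed
  qed
  have prod2: "(\<Prod>j<m. F (a j)) = (\<Prod>e\<in>{e\<in>E. snd (\<omega> e) = v}. F e)"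
    using prod.reindex_bij_betw[OF bij, of F] by simp
  show ?thesis
    unfolding new new2 H old
    using prod1 prod2 by (simp add: F_def p_def q_def)
qed


lemma flp_P: assumes psi: "\<psi> \<in> PiE E (\<lambda>_. {0, l})" shows "flp C l \<psi> \<in> PiE E (\<lambda>_. {0, l})"
proof -
  have 1: "\<forall>e\<in>E. flp C l \<psi> e \<in> {0, l}" using psi by (auto simp: PiE_iff flp_def)
  have 2: "flp C l \<psi> e = undefined" if "e \<notin> E" for e
  proof -
    have "e \<notin> set C" using that CE by blast
    then show ?thesis using psi that by (simp add: flp_def PiE_iff extensional_def)
  qed
  show ?thesis using 1 2 by (auto simp: PiE_iff extensional_def)
qed

lemma flp_flp: assumes psi: "\<psi> \<in> PiE E (\<lambda>_. {0, l})" shows "flp C l (flp C l \<psi>) = \<psi>"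
proof
  fix e show "flp C l (flp C l \<psi>) e = \<psi> e"
  proof (cases "e \<in> set C")
    case True
    then have "e \<in> E" using CE by blast
    then have "\<psi> e \<le> l" using psi by (auto simp: PiE_iff)
    then show ?thesis using True by (simp add: flp_def)
  qed (simp add: flp_def)
qed

lemma bij_flp: "bij_betw (flp C l) (PiE E (\<lambda>_. {0, l})) (PiE E (\<lambda>_. {0, l}))"
  apply (rule bij_betw_byWitness[where f'="flp C l"])
     apply (rule ballI, erule flp_flp)
    apply (rule ballI, erule flp_flp)
   apply (rule image_subsetI, erule flp_P)
  apply (rule image_subsetI, erule flp_P)
  done

lemma bij_nxt: "bij_betw (nxt C) (set C) (set C)"
  by (rule bij_betw_byWitness[where f'="prv C"]) (auto simp: prv_nxt[OF dC] nxt_prv[OF dC] nxt_in prv_in)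

lemma prod_all:
  assumes psi: "\<psi> \<in> PiE E (\<lambda>_. {0, l})"
  shows "(\<Prod>v\<in>V. h (vertex_tensor l E inc \<omega>' kin' kout' (\<lambda>e. \<phi> e + flp C l \<psi> e) v))
       = (\<Prod>v\<in>V. h (vertex_tensor l E inc \<omega> kin kout (\<lambda>e. \<phi> e + \<psi> e) v))"
proof -
  define F where "F = (\<lambda>e. if e \<in> set C then sg \<psi> e * sg \<psi> (nxt C e) else 1)"
  have "(\<Prod>v\<in>V. h (vertex_tensor l E inc \<omega>' kin' kout' (\<lambda>e. \<phi> e + flp C l \<psi> e) v))
      = (\<Prod>v\<in>V. (\<Prod>e\<in>{e\<in>E. snd (\<omega> e) = v}. F e) * h (vertex_tensor l E inc \<omega> kin kout (\<lambda>e. \<phi> e + \<psi> e) v))"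
    apply (rule prod.cong[OF refl])
    unfolding F_def by (rule vertex[OF psi])
  also have "\<dots> = (\<Prod>v\<in>V. \<Prod>e\<in>{e\<in>E. snd (\<omega> e) = v}. F e) * (\<Prod>v\<in>V. h (vertex_tensor l E inc \<omega> kin kout (\<lambda>e. \<phi> e + \<psi> e) v))"
    by (rule prod.distrib)
  also have "(\<Prod>v\<in>V. \<Prod>e\<in>{e\<in>E. snd (\<omega> e) = v}. F e) = (\<Prod>e\<in>E. F e)"
    by (rule prod.group[OF finE finV]) (use ends in auto)
  also have "(\<Prod>e\<in>E. F e) = 1"
  proof -
    have "(\<Prod>e\<in>E. F e) = (\<Prod>e\<in>E - set C. F e) * (\<Prod>e\<in>set C. F e)" by (rule prod.subset_diff[OF CE finE])
    also have "(\<Prod>e\<in>E - set C. F e) = 1" by (rule prod.neutral) (simp add: F_def)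
    also have "(\<Prod>e\<in>set C. F e) = (\<Prod>e\<in>set C. sg \<psi> e * sg \<psi> (nxt C e))" by (rule prod.cong) (simp_all add: F_def)
    also have "\<dots> = (\<Prod>e\<in>set C. sg \<psi> e) * (\<Prod>e\<in>set C. sg \<psi> (nxt C e))" by (rule prod.distrib)
    also have "(\<Prod>e\<in>set C. sg \<psi> (nxt C e)) = (\<Prod>e\<in>set C. sg \<psi> e)" by (rule prod.reindex_bij_betw[OF bij_nxt])
    also have "(\<Prod>e\<in>set C. sg \<psi> e) * (\<Prod>e\<in>set C. sg \<psi> e) = (\<Prod>e\<in>set C. sg \<psi> e * sg \<psi> e)" by (rule prod.distrib[symmetric])
    also have "\<dots> = 1" by (rule prod.neutral) (simp add: sg_def)
    finally show ?thesis by simp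
  qed
  finally show ?thesis by simp
qed

lemma ru: "\<forall>x\<in>E. \<forall>y\<in>E. \<forall>y'\<in>E. follows \<omega> kin kout x y \<longrightarrow> follows \<omega> kin kout x y' \<longrightarrow> y = y'"
proof (intro ballI impI)
  fix x y y' assume "x \<in> E" "y \<in> E" "y' \<in> E" "follows \<omega> kin kout x y" "follows \<omega> kin kout x y'"
  then show "y = y'" using kout_inj[of y y'] by (simp add: follows_def)
qed

lemma ru': "\<forall>x\<in>E. \<forall>y\<in>E. \<forall>y'\<in>E. follows \<omega>' kin' kout' x y \<longrightarrow> follows \<omega>' kin' kout' x y' \<longrightarrow> y = y'"
proof (intro ballI impI)
  fix x y y' assume a: "x \<in> E" "y \<in> E" "y' \<in> E" "follows \<omega>' kin' kout' x y" "follows \<omega>' kin' kout' x y'"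
  then have "follows \<omega> kin kout (prv C x) (nxt C y)" "follows \<omega> kin kout (prv C x) (nxt C y')"
    using fol' by auto
  then have "nxt C y = nxt C y'" using ru prvE nxtE a by blast
  then show "y = y'" using prv_nxt[OF dC] by metis
qed

lemma cycC: "cyc (follows \<omega> kin kout) C" using kc by (simp add: kcircuit_cyc)

lemma cycC': "cyc (follows \<omega>' kin' kout') (rev C)"
proof -
  have "cyc (\<lambda>x y. follows \<omega>' kin' kout' y x) C"
    unfolding cyc_def
  proof (intro conjI allI impI)
    show "C \<noteq> []" by (rule Cne)
    fix k assume k: "k < length C"
    define k1 where "k1 = (k + 1) mod length C"
    have k1n: "k1 < length C" using npos by (simp add: k1_def)
    have n1: "nxt C (C ! k) = C ! k1" using dC k by (simp add: nxt_nth k1_def)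
    have p1: "prv C (C ! k1) = C ! k" using prv_nxt[OF dC, of "C ! k"] n1 by simp
    have inE: "C ! k \<in> E" "C ! k1 \<in> E" using CE k k1n by auto
    have "follows \<omega> kin kout (C ! k) (C ! k1)" using fol[OF k] by (simp add: k1_def)
    then show "follows \<omega>' kin' kout' (C ! ((k + 1) mod length C)) (C ! k)"
      using fol'[OF inE(2) inE(1)] n1 p1 by (simp add: k1_def)
  qed
  from cyc_rev[OF this] show ?thesis by simp
qed

lemma transfer: assumes "set es \<subseteq> E" "set es \<inter> set C = {}"
  shows "\<forall>x\<in>set es. \<forall>y\<in>set es. follows \<omega> kin kout x y \<longleftrightarrow> follows \<omega>' kin' kout' x y"
proof (intro ballI)
  fix x y assume xy: "x \<in> set es" "y \<in> set es"
  then have "x \<in> E - set C" "y \<in> E - set C" using assms by auto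
  then show "follows \<omega> kin kout x y \<longleftrightarrow> follows \<omega>' kin' kout' x y"
    using om' kN by (simp add: follows_def)
qed

lemma circsets: "{set es |es. kcircuit E \<omega>' kin' kout' es} = {set es |es. kcircuit E \<omega> kin kout es}"
proof (rule set_eqI, rule iffI)
  fix X assume "X \<in> {set es |es. kcircuit E \<omega>' kin' kout' es}"
  then obtain es where X: "X = set es" and k: "kcircuit E \<omega>' kin' kout' es" by auto
  have es: "distinct es" "set es \<subseteq> E" "cyc (follows \<omega>' kin' kout') es" using k by (auto simp: kcircuit_cyc)
  show "X \<in> {set es |es. kcircuit E \<omega> kin kout es}"
  proof (cases "set es \<inter> set C = {}")
    case True
    have "cyc (follows \<omega> kin kout) es" by (rule cyc_cong[OF es(3)]) (use transfer[OF es(2) True] in blast)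
    then have "kcircuit E \<omega> kin kout es" using es by (simp add: kcircuit_cyc)
    then show ?thesis using X by blast
  next
    case False
    then obtain x where x: "x \<in> set es" "x \<in> set (rev C)" by auto
    have "set es = set (rev C)" by (rule cyc_meet[OF es(3) cycC' es(2) _ ru' x]) (use CE in simp)
    then have "X = set C" using X by simp
    then show ?thesis using kc by blast
  qed
next
  fix X assume "X \<in> {set es |es. kcircuit E \<omega> kin kout es}"
  then obtain es where X: "X = set es" and k: "kcircuit E \<omega> kin kout es" by auto
  have es: "distinct es" "set es \<subseteq> E" "cyc (follows \<omega> kin kout) es" using k by (auto simp: kcircuit_cyc)
  show "X \<in> {set es |es. kcircuit E \<omega>' kin' kout' es}"
  proof (cases "set es \<inter> set C = {}")
    case True
    have "cyc (follows \<omega>' kin' kout') es" by (rule cyc_cong[OF es(3)]) (use transfer[OF es(2) True] in blast)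
    then have "kcircuit E \<omega>' kin' kout' es" using es by (simp add: kcircuit_cyc)
    then show ?thesis using X by blast
  next
    case False
    then obtain x where x: "x \<in> set es" "x \<in> set C" by auto
    have "set es = set C" by (rule cyc_meet[OF es(3) cycC es(2) CE ru x])
    then have X2: "X = set (rev C)" using X by simp
    have "kcircuit E \<omega>' kin' kout' (rev C)" using cycC' dC CE by (simp add: kcircuit_cyc)
    then show ?thesis using X2 by blast
  qed
qed

lemma ncirc_eq: "ncirc E \<omega>' kin' kout' = ncirc E \<omega> kin kout"
  unfolding ncirc_def circsets ..

lemma main: "s_val l h \<phi> V E inc \<omega> kin kout = s_val l h \<phi> V E inc \<omega>' kin' kout'"
proof -
  define P where "P = PiE E (\<lambda>_. {0::nat, l})"
  have "(\<Sum>\<psi>\<in>P. \<Prod>v\<in>V. h (vertex_tensor l E inc \<omega>' kin' kout' (\<lambda>e. \<phi> e + \<psi> e) v))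
      = (\<Sum>\<psi>\<in>P. \<Prod>v\<in>V. h (vertex_tensor l E inc \<omega>' kin' kout' (\<lambda>e. \<phi> e + flp C l \<psi> e) v))"
    using sum.reindex_bij_betw[OF bij_flp, of "\<lambda>\<psi>. \<Prod>v\<in>V. h (vertex_tensor l E inc \<omega>' kin' kout' (\<lambda>e. \<phi> e + \<psi> e) v)"]
    by (simp add: P_def)
  also have "\<dots> = (\<Sum>\<psi>\<in>P. \<Prod>v\<in>V. h (vertex_tensor l E inc \<omega> kin kout (\<lambda>e. \<phi> e + \<psi> e) v))"
    by (rule sum.cong[OF refl]) (simp add: P_def prod_all)
  finally show ?thesis unfolding s_val_def ncirc_eq P_def by simp
qed

end

theorem lemma1:
  fixes l :: nat
    and h :: "(nat \<Rightarrow> complex) list \<Rightarrow> complex"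
    and V :: "'v set" and E :: "'e set" and inc :: "'e \<Rightarrow> 'v set"
    and \<omega> \<omega>' :: "'e \<Rightarrow> 'v \<times> 'v"
    and kin kout kin' kout' :: "'e \<Rightarrow> nat"
    and \<phi> :: "'e \<Rightarrow> nat"
    and C :: "'e list"
  assumes "exterior_form l h"
    and "eulerian V E inc"
    and "eulerian_orientation V E inc \<omega>"
    and "compatible_ordering V E inc \<omega> kin kout"
    and "\<phi> \<in> E \<rightarrow> {1..l}"
    and "kcircuit E \<omega> kin kout C"
    and "\<forall>e\<in>E. \<omega>' e = (if e \<in> set C then prod.swap (\<omega> e) else \<omega> e)"
    and "\<forall>i < length C. kout' (C ! i) = kout (C ! ((i + 1) mod length C)) \<and>
                        kin' (C ! ((i + 1) mod length C)) = kin (C ! i)"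
    and "\<forall>e \<in> E - set C. kin' e = kin e \<and> kout' e = kout e"
  shows "s_val l h \<phi> V E inc \<omega> kin kout = s_val l h \<phi> V E inc \<omega>' kin' kout'"
    by (rule main[OF assms])

end
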